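(* Let $\pi:(X,T)\to(Y,S)$ be a factor map between minimal systems which is not almost one-to-one, where $(Y,S)$ is invertible ($S$ a homeomorphism). Then $\inf_{y\in Y}\mathrm{diam}(\pi^{-1}(y))>0$. Moreover, if $\pi$ is also proximal, then $(X,T)$ is thickly sensitive.
   Context: Systems: compact metric $(X,\varrho)$ with continuous surjection. Minimal: every orbit dense. Factor map: continuous surjection with $\pi\circ T=S\circ\pi$; almost one-to-one: $\{y:\pi^{-1}(y)\text{ singleton}\}$ is dense in $Y$. Proximal factor map: every pair $x_1,x_2$ with $\pi(x_1)=\pi(x_2)$ satisfies $\liminf_n\varrho(T^nx_1,T^nx_2)=0$. $S_T(U,\delta)=\{n\in\mathbb{N}:\exists x_1,x_2\in U,\ \varrho(T^nx_1,T^nx_2)>\delta\}$; thickly sensitive: there is $\delta>0$ with $S_T(U,\delta)$ thick (containing arbitrarily long blocks of consecutive integers) for every opene $U$. *)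

theory Defs
  imports "HOL-Analysis.Analysis"
begin

definition tds :: "'a::metric_space set \<Rightarrow> ('a \<Rightarrow> 'a) \<Rightarrow> bool" where
  "tds X T \<longleftrightarrow> compact X \<and> X \<noteq> {} \<and> continuous_on X T \<and> T ` X = X"

definition minimal_sys :: "'a::metric_space set \<Rightarrow> ('a \<Rightarrow> 'a) \<Rightarrow> bool" where
  "minimal_sys X T \<longleftrightarrow> tds X T \<and>
     (\<forall>x\<in>X. closure (range (\<lambda>n. (T ^^ n) x)) = X)"

definition factor_map ::
  "'a::metric_space set \<Rightarrow> ('a \<Rightarrow> 'a) \<Rightarrow> 'b::metric_space set \<Rightarrow> ('b \<Rightarrow> 'b) \<Rightarrow> ('a \<Rightarrow> 'b) \<Rightarrow> bool" where
  "factor_map X T Y S p \<longleftrightarrow> continuous_on X p \<and> p ` X = Y \<and> (\<forall>x\<in>X. p (T x) = S (p x))"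

definition almost_one_to_one ::
  "'a::metric_space set \<Rightarrow> 'b::metric_space set \<Rightarrow> ('a \<Rightarrow> 'b) \<Rightarrow> bool" where
  "almost_one_to_one X Y p \<longleftrightarrow>
     Y \<subseteq> closure {y\<in>Y. \<exists>x. {x'\<in>X. p x' = y} = {x}}"

definition proximal_factor ::
  "'a::metric_space set \<Rightarrow> ('a \<Rightarrow> 'a) \<Rightarrow> ('a \<Rightarrow> 'b) \<Rightarrow> bool" where
  "proximal_factor X T p \<longleftrightarrow>
     (\<forall>x1\<in>X. \<forall>x2\<in>X. p x1 = p x2 \<longrightarrow>
        liminf (\<lambda>n. ereal (dist ((T ^^ n) x1) ((T ^^ n) x2))) = 0)"

definition sens_set :: "('a::metric_space \<Rightarrow> 'a) \<Rightarrow> 'a set \<Rightarrow> real \<Rightarrow> nat set" where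
  "sens_set T U \<delta> = {n. \<exists>x1\<in>U. \<exists>x2\<in>U. dist ((T ^^ n) x1) ((T ^^ n) x2) > \<delta>}"

definition thick :: "nat set \<Rightarrow> bool" where
  "thick A \<longleftrightarrow> (\<forall>L. \<exists>m. {m..<m+L} \<subseteq> A)"

definition thickly_sensitive :: "'a::metric_space set \<Rightarrow> ('a \<Rightarrow> 'a) \<Rightarrow> bool" where
  "thickly_sensitive X T \<longleftrightarrow> (\<exists>\<delta>>0. \<forall>U. openin (top_of_set X) U \<and> U \<noteq> {} \<longrightarrow>
      thick (sens_set T U \<delta>))"

end

theory Submission
  imports Defs
begin

lemma funpow_in: "T ` X \<subseteq> X \<Longrightarrow> x \<in> X \<Longrightarrow> (T^^n) x \<in> X"
  by (induction n) auto

lemma funpow_cont: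
  assumes "continuous_on X T" "T ` X \<subseteq> X"
  shows "continuous_on X (T^^n)"
proof (induction n)
  case 0 then show ?case by (simp add: continuous_on_id)
next
  case (Suc n)
  have "continuous_on X (\<lambda>x. T ((T^^n) x))"
    by (rule continuous_on_compose2[OF assms(1) Suc]) (use funpow_in[OF assms(2)] in auto)
  then show ?case by (simp add: o_def)
qed

lemma factor_funpow:
  assumes "\<forall>x\<in>X. p (T x) = S (p x)" "T ` X \<subseteq> X" "x \<in> X"
  shows "p ((T^^n) x) = (S^^n) (p x)"
proof (induction n)
  case (Suc n)
  have "(T^^n) x \<in> X" by (rule funpow_in[OF assms(2,3)])
  then show ?case using Suc assms(1) by simp
qed simp

lemma fibre_step:
  assumes "T ` X = X" "\<forall>x\<in>X. p (T x) = S (p x)" "p ` X = Y" "inj_on S Y" "y \<in> Y"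
  shows "{x\<in>X. p x = S y} = T ` {x\<in>X. p x = y}"
proof
  show "T ` {x\<in>X. p x = y} \<subseteq> {x\<in>X. p x = S y}"
  proof
    fix x' assume "x' \<in> T ` {x\<in>X. p x = y}"
    then obtain x where x: "x \<in> X" "p x = y" "x' = T x" by blast
    have "T x \<in> X" using x(1) assms(1) by (metis imageI)
    then show "x' \<in> {x\<in>X. p x = S y}" using x assms(2) by simp
  qed
  show "{x\<in>X. p x = S y} \<subseteq> T ` {x\<in>X. p x = y}"
  proof
    fix x' assume x': "x' \<in> {x\<in>X. p x = S y}"
    have "x' \<in> T ` X" using x' assms(1) by simp
    then obtain x where x: "x \<in> X" "x' = T x" by (rule imageE) simp
    then have "S (p x) = S y" using x' assms(2) by simp
    moreover have "p x \<in> Y" using assms(3) x(1) by (metis imageI)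
    ultimately have "p x = y" using inj_onD[OF assms(4)] assms(5) by blast
    then show "x' \<in> T ` {x\<in>X. p x = y}" using x by auto
  qed
qed

lemma fibre_funpow:
  assumes "T ` X = X" "\<forall>x\<in>X. p (T x) = S (p x)" "p ` X = Y" "inj_on S Y" "y \<in> Y"
  shows "{x\<in>X. p x = (S^^n) y} = (T^^n) ` {x\<in>X. p x = y}"
proof (induction n)
  case 0 then show ?case by simp
next
  case (Suc n)
  have SY: "S ` Y \<subseteq> Y"
  proof
    fix z assume "z \<in> S ` Y"
    then obtain x where x: "x \<in> X" "z = S (p x)" using assms(3) by blast
    have "T x \<in> X" using x(1) assms(1) by (metis imageI)
    then have "p (T x) \<in> Y" using assms(3) by (metis imageI)
    then show "z \<in> Y" using x assms(2) by simp
  qed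
  have "(S^^n) y \<in> Y" using funpow_in[OF SY assms(5)] .
  then have "{x\<in>X. p x = (S^^Suc n) y} = T ` {x\<in>X. p x = (S^^n) y}"
    using fibre_step[OF assms(1-4)] by simp
  also have "\<dots> = T ` (T^^n) ` {x\<in>X. p x = y}" using Suc by simp
  finally show ?case by (simp add: image_comp)
qed

lemma modulus:
  assumes "compact X" "continuous_on X T" "T ` X \<subseteq> X" "\<epsilon> > 0"
  shows "\<exists>\<eta>>0. \<forall>x\<in>X. \<forall>x'\<in>X. dist x x' < \<eta> \<longrightarrow> (\<forall>j\<le>N. dist ((T^^j) x) ((T^^j) x') < \<epsilon>)"
proof (induction N)
  case 0 then show ?case using assms(4) by auto
next
  case (Suc N)
  then obtain \<eta>1 where e1: "\<eta>1 > 0" "\<forall>x\<in>X. \<forall>x'\<in>X. dist x x' < \<eta>1 \<longrightarrow> (\<forall>j\<le>N. dist ((T^^j) x) ((T^^j) x') < \<epsilon>)"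
    by blast
  have "uniformly_continuous_on X (T^^Suc N)"
    using compact_uniformly_continuous[OF funpow_cont[OF assms(2,3)] assms(1)] .
  then obtain \<eta>2 where e2: "\<eta>2 > 0" "\<forall>x\<in>X. \<forall>x'\<in>X. dist x' x < \<eta>2 \<longrightarrow> dist ((T^^Suc N) x') ((T^^Suc N) x) < \<epsilon>"
    unfolding uniformly_continuous_on_def using assms(4) by blast
  show ?case
  proof (intro exI[of _ "min \<eta>1 \<eta>2"] conjI ballI impI allI)
    show "min \<eta>1 \<eta>2 > 0" using e1 e2 by simp
    fix x x' j assume "x \<in> X" "x' \<in> X" "dist x x' < min \<eta>1 \<eta>2" "j \<le> Suc N"
    then show "dist ((T^^j) x) ((T^^j) x') < \<epsilon>"
      using e1(2) e2(2) by (cases "j = Suc N") (auto simp: dist_commute le_Suc_eq)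
  qed
qed


lemma compact_seq:
  fixes X :: "'a::metric_space set" and f :: "nat \<Rightarrow> 'a"
  assumes "compact X" "\<And>n. f n \<in> X"
  obtains l r where "l \<in> X" "strict_mono (r :: nat \<Rightarrow> nat)" "(\<lambda>n. f (r n)) \<longlonglongrightarrow> l"
proof -
  have "\<forall>n. f n \<in> X" using assms(2) by simp
  then obtain l r where "l \<in> X" "strict_mono (r :: nat \<Rightarrow> nat)" "(f \<circ> r) \<longlonglongrightarrow> l"
    by (rule seq_compactE[OF compact_imp_seq_compact[OF assms(1)]])
  then show ?thesis using that unfolding o_def by blast
qed

lemma return_time:
  assumes "compact X" "continuous_on X T" "T ` X \<subseteq> X"
    and "\<forall>x\<in>X. closure (range (\<lambda>n. (T^^n) x)) = X" "x0 \<in> X" "r > 0"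
  shows "\<exists>K. \<forall>x\<in>X. \<exists>s\<le>K. dist ((T^^s) x) x0 < r"
proof (rule ccontr)
  assume "\<not> ?thesis"
  then have "\<forall>K. \<exists>x. x \<in> X \<and> (\<forall>s\<le>K. r \<le> dist ((T^^s) x) x0)"
    by (meson not_less)
  then have "\<exists>xs. \<forall>K. xs K \<in> X \<and> (\<forall>s\<le>K. r \<le> dist ((T^^s) (xs K)) x0)"
    by (rule choice)
  then obtain xs where xs0: "\<forall>K. xs K \<in> X \<and> (\<forall>s\<le>K. r \<le> dist ((T^^s) (xs K)) x0)"
    by blast
  have xs: "\<And>K. xs K \<in> X" "\<And>K s. s \<le> K \<Longrightarrow> r \<le> dist ((T^^s) (xs K)) x0"
    using xs0 by auto
  obtain l q where l: "l \<in> X" "strict_mono q" "(\<lambda>n. xs (q n)) \<longlonglongrightarrow> l"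
    by (rule compact_seq[OF assms(1) xs(1)])
  have ge: "r \<le> dist ((T^^s) l) x0" for s
  proof -
    have "(\<lambda>k. (T^^s) (xs (q k))) \<longlonglongrightarrow> (T^^s) l"
      by (rule continuous_on_tendsto_compose[OF funpow_cont[OF assms(2,3)] l(3) l(1)])
         (simp add: xs(1))
    then have lim: "(\<lambda>k. dist ((T^^s) (xs (q k))) x0) \<longlonglongrightarrow> dist ((T^^s) l) x0"
      by (intro tendsto_intros)
    show ?thesis
    proof (rule LIMSEQ_le_const[OF lim], intro exI allI impI)
      fix k assume "s \<le> k"
      then have "s \<le> q k" using seq_suble[OF l(2), of k] by linarith
      then show "r \<le> dist ((T^^s) (xs (q k))) x0" by (rule xs(2))
    qed
  qed
  have "x0 \<in> closure (range (\<lambda>n. (T^^n) l))" using assms(4,5) l(1) by simp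
  then have "\<exists>y\<in>range (\<lambda>n. (T^^n) l). dist y x0 < r"
    using closure_approachable assms(6) by metis
  then obtain n where "dist ((T^^n) l) x0 < r" by auto
  then show False using ge[of n] by simp
qed

lemma pair_unif:
  fixes X :: "'a::metric_space set" and p :: "'a \<Rightarrow> 'b::metric_space"
  assumes "compact X" "continuous_on X T" "T ` X \<subseteq> X" "continuous_on X p"
    and "proximal_factor X T p" "\<epsilon> > 0"
  shows "\<exists>N. \<forall>a\<in>X. \<forall>b\<in>X. p a = p b \<longrightarrow> (\<exists>t\<le>N. dist ((T^^t) a) ((T^^t) b) < \<epsilon>)"
proof (rule ccontr)
  assume "\<not> ?thesis"
  then have "\<forall>N. \<exists>a b. a \<in> X \<and> b \<in> X \<and> p a = p b \<and>
      (\<forall>t\<le>N. \<epsilon> \<le> dist ((T^^t) a) ((T^^t) b))"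
    by (simp add: not_less) blast
  then have "\<forall>N. \<exists>ab. fst ab \<in> X \<and> snd ab \<in> X \<and> p (fst ab) = p (snd ab) \<and>
      (\<forall>t\<le>N. \<epsilon> \<le> dist ((T^^t) (fst ab)) ((T^^t) (snd ab)))"
    by (metis (no_types, lifting) fst_conv snd_conv)
  then have "\<exists>f. \<forall>N. fst (f N) \<in> X \<and> snd (f N) \<in> X \<and> p (fst (f N)) = p (snd (f N)) \<and>
      (\<forall>t\<le>N. \<epsilon> \<le> dist ((T^^t) (fst (f N))) ((T^^t) (snd (f N))))"
    by (rule choice)
  then obtain f where f0: "\<forall>N. fst (f N) \<in> X \<and> snd (f N) \<in> X \<and> p (fst (f N)) = p (snd (f N)) \<and>
      (\<forall>t\<le>N. \<epsilon> \<le> dist ((T^^t) (fst (f N))) ((T^^t) (snd (f N))))"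
    by blast
  have f: "\<And>N. fst (f N) \<in> X" "\<And>N. snd (f N) \<in> X" "\<And>N. p (fst (f N)) = p (snd (f N))"
    "\<And>N t. t \<le> N \<Longrightarrow> \<epsilon> \<le> dist ((T^^t) (fst (f N))) ((T^^t) (snd (f N)))"
    using f0 by auto
  have fX: "f N \<in> X \<times> X" for N using f(1,2)[of N] by (simp add: mem_Times_iff)
  obtain l q where l: "l \<in> X \<times> X" "strict_mono q" "(\<lambda>n. f (q n)) \<longlonglongrightarrow> l"
    by (rule compact_seq[OF compact_Times[OF assms(1) assms(1)] fX])
  define a where "a = fst l"
  define b where "b = snd l"
  have aX: "a \<in> X" and bX: "b \<in> X" using l(1) by (auto simp: a_def b_def mem_Times_iff)
  have la: "(\<lambda>n. fst (f (q n))) \<longlonglongrightarrow> a" unfolding a_def by (intro tendsto_intros l(3))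
  have lb: "(\<lambda>n. snd (f (q n))) \<longlonglongrightarrow> b" unfolding b_def by (intro tendsto_intros l(3))
  have pa: "(\<lambda>n. p (fst (f (q n)))) \<longlonglongrightarrow> p a"
    by (rule continuous_on_tendsto_compose[OF assms(4) la aX]) (simp add: f(1))
  have pb: "(\<lambda>n. p (snd (f (q n)))) \<longlonglongrightarrow> p b"
    by (rule continuous_on_tendsto_compose[OF assms(4) lb bX]) (simp add: f(2))
  have "(\<lambda>n. p (snd (f (q n)))) \<longlonglongrightarrow> p a" using pa f(3) by simp
  then have "p a = p b" using LIMSEQ_unique pb by blast
  have ge: "\<epsilon> \<le> dist ((T^^t) a) ((T^^t) b)" for t
  proof -
    have "(\<lambda>k. (T^^t) (fst (f (q k)))) \<longlonglongrightarrow> (T^^t) a"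
      by (rule continuous_on_tendsto_compose[OF funpow_cont[OF assms(2,3)] la aX]) (simp add: f(1))
    moreover have "(\<lambda>k. (T^^t) (snd (f (q k)))) \<longlonglongrightarrow> (T^^t) b"
      by (rule continuous_on_tendsto_compose[OF funpow_cont[OF assms(2,3)] lb bX]) (simp add: f(2))
    ultimately have lim: "(\<lambda>k. dist ((T^^t) (fst (f (q k)))) ((T^^t) (snd (f (q k))))) \<longlonglongrightarrow> dist ((T^^t) a) ((T^^t) b)"
      by (intro tendsto_intros)
    show ?thesis
    proof (rule LIMSEQ_le_const[OF lim], intro exI allI impI)
      fix k assume "t \<le> k"
      then have "t \<le> q k" using seq_suble[OF l(2), of k] by linarith
      then show "\<epsilon> \<le> dist ((T^^t) (fst (f (q k)))) ((T^^t) (snd (f (q k))))" by (rule f(4))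
    qed
  qed
  have "ereal \<epsilon> \<le> liminf (\<lambda>n. ereal (dist ((T^^n) a) ((T^^n) b)))"
    by (rule Liminf_bounded) (simp add: ge)
  moreover have "liminf (\<lambda>n. ereal (dist ((T^^n) a) ((T^^n) b))) = 0"
    using assms(5) aX bX \<open>p a = p b\<close> unfolding proximal_factor_def by blast
  ultimately show False using assms(6) by simp
qed


lemma collapse:
  fixes X :: "'a::metric_space set" and p :: "'a \<Rightarrow> 'b::metric_space"
  assumes "compact X" "continuous_on X T" "T ` X \<subseteq> X" "continuous_on X p"
    and "proximal_factor X T p" "\<forall>x\<in>X. p (T x) = S (p x)"
  shows "\<epsilon> > 0 \<Longrightarrow> \<exists>N. \<forall>A. finite A \<longrightarrow> card A \<le> k \<longrightarrow> A \<subseteq> X \<longrightarrow> (\<forall>a\<in>A. \<forall>b\<in>A. p a = p b) \<longrightarrow>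
      (\<exists>t\<le>N. \<forall>a\<in>A. \<forall>b\<in>A. dist ((T^^t) a) ((T^^t) b) < \<epsilon>)"
proof (induction k arbitrary: \<epsilon>)
  case 0
  show ?case by (intro exI[of _ 0] allI impI) auto
next
  case (Suc k)
  have e2: "\<epsilon>/2 > 0" using Suc.prems by simp
  obtain N2 where N2: "\<forall>a\<in>X. \<forall>b\<in>X. p a = p b \<longrightarrow> (\<exists>t\<le>N2. dist ((T^^t) a) ((T^^t) b) < \<epsilon>/2)"
    using pair_unif[OF assms(1-5) e2] by blast
  obtain \<eta> where eta: "\<eta> > 0" "\<forall>x\<in>X. \<forall>x'\<in>X. dist x x' < \<eta> \<longrightarrow> (\<forall>j\<le>N2. dist ((T^^j) x) ((T^^j) x') < \<epsilon>/2)"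
    using modulus[OF assms(1-3) e2] by blast
  from Suc.IH[OF eta(1)] obtain N1 where N1: "\<forall>A. finite A \<longrightarrow> card A \<le> k \<longrightarrow> A \<subseteq> X \<longrightarrow> (\<forall>a\<in>A. \<forall>b\<in>A. p a = p b) \<longrightarrow>
      (\<exists>t\<le>N1. \<forall>a\<in>A. \<forall>b\<in>A. dist ((T^^t) a) ((T^^t) b) < \<eta>)"
    ..
  show ?case
  proof (rule exI[of _ "N1 + N2"], intro allI impI)
    fix A :: "'a set"
    assume A: "finite A" "card A \<le> Suc k" "A \<subseteq> X" "\<forall>a\<in>A. \<forall>b\<in>A. p a = p b"
    show "\<exists>t\<le>N1 + N2. \<forall>a\<in>A. \<forall>b\<in>A. dist ((T^^t) a) ((T^^t) b) < \<epsilon>"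
    proof (cases "A = {}")
      case True then show ?thesis by auto
    next
      case False
      then obtain a0 where a0: "a0 \<in> A" by blast
      define A' where "A' = A - {a0}"
      have A'1: "finite A'" using A(1) by (simp add: A'_def)
      have A'2: "card A' \<le> k" using A(1,2) a0 by (simp add: A'_def card_Diff_singleton)
      have A'3: "A' \<subseteq> X" using A(3) by (auto simp: A'_def)
      have A'4: "\<forall>a\<in>A'. \<forall>b\<in>A'. p a = p b" using A(4) by (simp add: A'_def)
      note A' = A'1 A'2 A'3 A'4
      obtain t1 where t1: "t1 \<le> N1" "\<forall>a\<in>A'. \<forall>b\<in>A'. dist ((T^^t1) a) ((T^^t1) b) < \<eta>"
        using mp[OF mp[OF mp[OF mp[OF spec[OF N1, of A'] A'1] A'2] A'3] A'4] by blast
      show ?thesis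
      proof (cases "A' = {}")
        case True
        then have "A = {a0}" using a0 by (auto simp: A'_def)
        then show ?thesis using Suc.prems by (intro exI[of _ 0]) auto
      next
        case False
        then obtain a1 where a1: "a1 \<in> A'" by blast
        have a0X: "a0 \<in> X" and a1X: "a1 \<in> X" using a0 a1 A(3) by (auto simp: A'_def)
        have uX: "(T^^t1) a0 \<in> X" and vX: "(T^^t1) a1 \<in> X"
          using funpow_in[OF assms(3)] a0X a1X by auto
        have a1A: "a1 \<in> A" using a1 by (simp add: A'_def)
        have "p a0 = p a1" using bspec[OF bspec[OF A(4) a0] a1A] .
        then have "p ((T^^t1) a0) = p ((T^^t1) a1)"
          using factor_funpow[OF assms(6,3) a0X] factor_funpow[OF assms(6,3) a1X] by simp
        then have "\<exists>t\<le>N2. dist ((T^^t) ((T^^t1) a0)) ((T^^t) ((T^^t1) a1)) < \<epsilon>/2"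
          using mp[OF bspec[OF bspec[OF N2 uX] vX]] by blast
        then obtain t2 where t2: "t2 \<le> N2" "dist ((T^^t2) ((T^^t1) a0)) ((T^^t2) ((T^^t1) a1)) < \<epsilon>/2"
          by blast
        have comp: "(T^^(t2 + t1)) x = (T^^t2) ((T^^t1) x)" for x by (simp add: funpow_add)
        have close: "dist ((T^^(t2+t1)) a) ((T^^(t2+t1)) a1) < \<epsilon>/2" if "a \<in> A" for a
        proof (cases "a = a0")
          case True then show ?thesis using t2 comp by simp
        next
          case False
          then have aA': "a \<in> A'" using that by (simp add: A'_def)
          then have "(T^^t1) a \<in> X" using funpow_in[OF assms(3)] A'(3) by auto
          moreover have "dist ((T^^t1) a) ((T^^t1) a1) < \<eta>" using t1(2) aA' a1 by blast
          ultimately show ?thesis using eta(2) vX t2(1) comp by simp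
        qed
        show ?thesis
        proof (intro exI[of _ "t2 + t1"] conjI ballI)
          show "t2 + t1 \<le> N1 + N2" using t1 t2 by simp
          fix a b assume "a \<in> A" "b \<in> A"
          then show "dist ((T^^(t2+t1)) a) ((T^^(t2+t1)) b) < \<epsilon>"
            using close[of a] close[of b] dist_triangle_half_l by blast
        qed
      qed
    qed
  qed
qed


lemma fib_compact:
  fixes X :: "'a::metric_space set" and p :: "'a \<Rightarrow> 'b::metric_space"
  assumes "compact X" "continuous_on X p"
  shows "compact {x\<in>X. p x = y}"
proof -
  have "closed {x\<in>X. p x = y}"
    by (rule continuous_closed_preimage_constant[OF assms(2) compact_imp_closed[OF assms(1)]])
  then have "compact (X \<inter> {x\<in>X. p x = y})" using assms(1) by (rule compact_Int_closed[rotated])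
  moreover have "X \<inter> {x\<in>X. p x = y} = {x\<in>X. p x = y}" by auto
  ultimately show ?thesis by simp
qed

lemma diam_le:
  assumes "\<And>x y. x \<in> S \<Longrightarrow> y \<in> S \<Longrightarrow> dist x y \<le> d" "0 \<le> d"
  shows "diameter S \<le> d"
  using assms unfolding diameter_def by (auto intro!: cSUP_least)

lemma funpow_surj: "S ` Y = Y \<Longrightarrow> (S^^n) ` Y = Y"
proof (induction n)
  case 0 then show ?case by simp
next
  case (Suc n)
  have "(S^^Suc n) ` Y = S ` ((S^^n) ` Y)" by (simp add: image_comp)
  also have "\<dots> = Y" using Suc by simp
  finally show ?case .
qed

lemma usc_diam:
  fixes X :: "'a::metric_space set" and p :: "'a \<Rightarrow> 'b::metric_space"
  assumes "compact X" "continuous_on X p" "p ` X = Y" "y \<in> Y" "diameter {x\<in>X. p x = y} < e"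
  shows "\<exists>r>0. \<forall>y'\<in>Y. dist y' y < r \<longrightarrow> diameter {x\<in>X. p x = y'} < e"
proof (rule ccontr)
  assume "\<not> ?thesis"
  then have "\<forall>k::nat. \<exists>y'. y' \<in> Y \<and> dist y' y < inverse (Suc k) \<and> e \<le> diameter {x\<in>X. p x = y'}"
    by (metis not_less of_nat_0_less_iff inverse_positive_iff_positive zero_less_Suc)
  then have "\<exists>ys. \<forall>k::nat. ys k \<in> Y \<and> dist (ys k) y < inverse (Suc k) \<and> e \<le> diameter {x\<in>X. p x = ys k}"
    by (rule choice)
  then obtain ys where ys0: "\<forall>k::nat. ys k \<in> Y \<and> dist (ys k) y < inverse (Suc k) \<and> e \<le> diameter {x\<in>X. p x = ys k}"
    by blast
  have ysY: "ys k \<in> Y" and ysd: "dist (ys k) y < inverse (Suc k)"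
    and yse: "e \<le> diameter {x\<in>X. p x = ys k}" for k using ys0 by auto
  have "\<exists>ab. fst ab \<in> X \<and> snd ab \<in> X \<and> p (fst ab) = ys k \<and> p (snd ab) = ys k \<and> e \<le> dist (fst ab) (snd ab)" for k
  proof -
    have ne: "{x\<in>X. p x = ys k} \<noteq> {}" using ysY[of k] assms(3) by force
    obtain a b where "a \<in> {x\<in>X. p x = ys k}" "b \<in> {x\<in>X. p x = ys k}"
      "dist a b = diameter {x\<in>X. p x = ys k}"
      using diameter_compact_attained[OF fib_compact[OF assms(1,2)] ne] by blast
    then show ?thesis using yse[of k] by (intro exI[of _ "(a,b)"]) auto
  qed
  then have "\<exists>f. \<forall>k. fst (f k) \<in> X \<and> snd (f k) \<in> X \<and> p (fst (f k)) = ys k \<and> p (snd (f k)) = ys k \<and> e \<le> dist (fst (f k)) (snd (f k))"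
    by (rule choice[OF allI])
  then obtain f where f0: "\<forall>k. fst (f k) \<in> X \<and> snd (f k) \<in> X \<and> p (fst (f k)) = ys k \<and> p (snd (f k)) = ys k \<and> e \<le> dist (fst (f k)) (snd (f k))"
    by blast
  have f: "\<And>k. fst (f k) \<in> X" "\<And>k. snd (f k) \<in> X" "\<And>k. p (fst (f k)) = ys k" "\<And>k. p (snd (f k)) = ys k"
    "\<And>k. e \<le> dist (fst (f k)) (snd (f k))" using f0 by auto
  have fX: "f k \<in> X \<times> X" for k using f(1,2)[of k] by (simp add: mem_Times_iff)
  obtain l q where l: "l \<in> X \<times> X" "strict_mono q" "(\<lambda>n. f (q n)) \<longlonglongrightarrow> l"
    by (rule compact_seq[OF compact_Times[OF assms(1) assms(1)] fX])
  define a where "a = fst l"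
  define b where "b = snd l"
  have aX: "a \<in> X" and bX: "b \<in> X" using l(1) by (auto simp: a_def b_def mem_Times_iff)
  have la: "(\<lambda>n. fst (f (q n))) \<longlonglongrightarrow> a" unfolding a_def by (intro tendsto_intros l(3))
  have lb: "(\<lambda>n. snd (f (q n))) \<longlonglongrightarrow> b" unfolding b_def by (intro tendsto_intros l(3))
  have "(\<lambda>k. dist (ys k) y) \<longlonglongrightarrow> 0"
  proof (rule Lim_null_comparison[OF _ LIMSEQ_inverse_real_of_nat])
    show "\<forall>\<^sub>F k in sequentially. norm (dist (ys k) y) \<le> inverse (real (Suc k))"
      using ysd by (simp add: less_imp_le)
  qed
  then have "ys \<longlonglongrightarrow> y" by (rule tendsto_dist_iff[THEN iffD2])
  then have ysq: "(\<lambda>n. ys (q n)) \<longlonglongrightarrow> y" using LIMSEQ_subseq_LIMSEQ[OF _ l(2)] by (simp add: o_def)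
  have pa: "(\<lambda>n. p (fst (f (q n)))) \<longlonglongrightarrow> p a"
    by (rule continuous_on_tendsto_compose[OF assms(2) la aX]) (simp add: f(1))
  have pb: "(\<lambda>n. p (snd (f (q n)))) \<longlonglongrightarrow> p b"
    by (rule continuous_on_tendsto_compose[OF assms(2) lb bX]) (simp add: f(2))
  have "p a = y" using LIMSEQ_unique[OF pa] ysq f(3) by simp
  moreover have "p b = y" using LIMSEQ_unique[OF pb] ysq f(4) by simp
  moreover have "e \<le> dist a b"
  proof -
    have lim: "(\<lambda>n. dist (fst (f (q n))) (snd (f (q n)))) \<longlonglongrightarrow> dist a b"
      by (intro tendsto_intros la lb)
    show ?thesis by (rule LIMSEQ_le_const[OF lim]) (use f(5) in blast)
  qed
  moreover have "bounded {x\<in>X. p x = y}"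
    by (rule compact_imp_bounded[OF fib_compact[OF assms(1,2)]])
  ultimately have "e \<le> diameter {x\<in>X. p x = y}"
    using diameter_bounded_bound[of "{x\<in>X. p x = y}" a b] aX bX by simp
  then show False using assms(5) by simp
qed


lemma part1:
  fixes X :: "'a::metric_space set" and Y :: "'b::metric_space set" and p :: "'a \<Rightarrow> 'b"
  assumes X: "compact X" "continuous_on X T" "T ` X = X"
    and Y: "compact Y" "Y \<noteq> {}" "S ` Y = Y" "\<forall>y\<in>Y. closure (range (\<lambda>n. (S^^n) y)) = Y" "continuous_on Y S"
    and pc: "continuous_on X p" "p ` X = Y" "\<forall>x\<in>X. p (T x) = S (p x)" "inj_on S Y"
    and na: "\<not> almost_one_to_one X Y p"
  shows "(INF y\<in>Y. diameter {x\<in>X. p x = y}) > 0"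
proof (rule ccontr)
  assume "\<not> (INF y\<in>Y. diameter {x\<in>X. p x = y}) > 0"
  then have I0: "(INF y\<in>Y. diameter {x\<in>X. p x = y}) \<le> 0" by simp
  have TX: "T ` X \<subseteq> X" using X(3) by simp
  have SY: "S ` Y \<subseteq> Y" using Y(3) by simp
  have Fc: "compact {x\<in>X. p x = y}" for y by (rule fib_compact[OF X(1) pc(1)])
  have Fb: "bounded {x\<in>X. p x = y}" for y by (rule compact_imp_bounded[OF Fc])
  have Fd0: "0 \<le> diameter {x\<in>X. p x = y}" for y by (rule diameter_ge_0[OF Fb])
  have bdd: "bdd_below ((\<lambda>y. diameter {x\<in>X. p x = y}) ` Y)"
    by (rule bdd_belowI[of _ 0]) (use Fd0 in auto)
  have small: "\<exists>z\<in>Y. diameter {x\<in>X. p x = z} < \<eta>" if "\<eta> > 0" for \<eta>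
  proof -
    have "(INF y\<in>Y. diameter {x\<in>X. p x = y}) < \<eta>" using I0 that by linarith
    then show ?thesis using cINF_less_iff[OF Y(2) bdd] by blast
  qed
  define D where "D = (\<lambda>n::nat. {y\<in>Y. diameter {x\<in>X. p x = y} < inverse (Suc n)})"
  have DY: "D n \<subseteq> Y" for n by (auto simp: D_def)
  have Dopen: "openin (top_of_set Y) (D n)" for n
    unfolding openin_euclidean_subtopology_iff
  proof (intro conjI ballI DY)
    fix y assume "y \<in> D n"
    then have yY: "y \<in> Y" and yd: "diameter {x\<in>X. p x = y} < inverse (Suc n)" by (auto simp: D_def)
    obtain r where "r > 0" "\<forall>y'\<in>Y. dist y' y < r \<longrightarrow> diameter {x\<in>X. p x = y'} < inverse (Suc n)"
      using usc_diam[OF X(1) pc(1) pc(2) yY yd] by blast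
    then show "\<exists>e>0. \<forall>x'\<in>Y. dist x' y < e \<longrightarrow> x' \<in> D n" by (auto simp: D_def)
  qed
  have Ddense: "Y \<subseteq> closure (D n)" for n
  proof
    fix y assume yY: "y \<in> Y"
    show "y \<in> closure (D n)" unfolding closure_approachable
    proof (intro allI impI)
      fix \<epsilon> :: real assume "\<epsilon> > 0"
      obtain K where K: "\<forall>x\<in>Y. \<exists>s\<le>K. dist ((S^^s) x) y < \<epsilon>"
        using return_time[OF Y(1) Y(5) SY Y(4) yY \<open>\<epsilon> > 0\<close>] by blast
      define e where "e = inverse (real (Suc n))"
      have e0: "e/2 > 0" by (simp add: e_def)
      obtain \<eta> where eta: "\<eta> > 0" "\<forall>x\<in>X. \<forall>x'\<in>X. dist x x' < \<eta> \<longrightarrow> (\<forall>j\<le>K. dist ((T^^j) x) ((T^^j) x') < e/2)"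
        using modulus[OF X(1,2) TX e0] by blast
      obtain z where zY: "z \<in> Y" and zd: "diameter {x\<in>X. p x = z} < \<eta>" using small[OF eta(1)] by blast
      obtain s where s: "s \<le> K" "dist ((S^^s) z) y < \<epsilon>" using K zY by blast
      have szY: "(S^^s) z \<in> Y" using funpow_in[OF SY zY] .
      have Fs: "{x\<in>X. p x = (S^^s) z} = (T^^s) ` {x\<in>X. p x = z}"
        by (rule fibre_funpow[OF X(3) pc(3) pc(2) pc(4) zY])
      have "diameter {x\<in>X. p x = (S^^s) z} \<le> e/2"
        unfolding Fs
      proof (rule diam_le)
        fix u v assume "u \<in> (T^^s) ` {x\<in>X. p x = z}" "v \<in> (T^^s) ` {x\<in>X. p x = z}"
        then obtain a b where ab: "a \<in> {x\<in>X. p x = z}" "b \<in> {x\<in>X. p x = z}" "u = (T^^s) a" "v = (T^^s) b"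
          by blast
        have "dist a b \<le> diameter {x\<in>X. p x = z}" using diameter_bounded_bound[OF Fb ab(1,2)] .
        then have "dist a b < \<eta>" using zd by linarith
        then have "dist ((T^^s) a) ((T^^s) b) < e/2" using eta(2) ab(1,2) s(1) by blast
        then show "dist u v \<le> e/2" using ab(3,4) by simp
      next
        show "0 \<le> e/2" using e0 by simp
      qed
      then have "diameter {x\<in>X. p x = (S^^s) z} < e" using e0 by linarith
      then have "(S^^s) z \<in> D n" using szY by (simp add: D_def e_def)
      then show "\<exists>y'\<in>D n. dist y' y < \<epsilon>" using s(2) by blast
    qed
  qed
  have lc: "locally_compact_space (top_of_set Y)"
    by (rule compact_imp_locally_compact_space[OF compact_space_subtopology]) (simp add: Y(1))
  have rg: "regular_space (top_of_set Y)"
    by (rule metrizable_imp_regular_space[OF metrizable_space_subtopology[OF metrizable_space_euclidean]])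
  have cl: "top_of_set Y closure_of (D n) = Y" for n
  proof -
    have "top_of_set Y closure_of (D n) = Y \<inter> closure (Y \<inter> D n)"
      by (simp add: closure_of_subtopology)
    also have "Y \<inter> D n = D n" using DY by blast
    finally show ?thesis using Ddense[of n] by blast
  qed
  have B: "top_of_set Y closure_of \<Inter>(range D) = topspace (top_of_set Y)"
  proof (rule Baire_category)
    show "completely_metrizable_space (top_of_set Y) \<or> locally_compact_space (top_of_set Y) \<and> regular_space (top_of_set Y)"
      using lc rg by blast
    show "countable (range D)" by simp
    fix U assume "U \<in> range D"
    then obtain n where "U = D n" by blast
    then show "openin (top_of_set Y) U \<and> top_of_set Y closure_of U = topspace (top_of_set Y)"
      using Dopen[of n] cl[of n] by simp
  qed
  have IY: "\<Inter>(range D) \<subseteq> Y" using DY by blast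
  have E0: "Y \<inter> closure (Y \<inter> \<Inter>(range D)) = Y" using B by (simp add: closure_of_subtopology)
  have E1: "Y \<inter> \<Inter>(range D) = \<Inter>(range D)" by (rule Int_absorb1[OF IY])
  have E: "Y \<inter> closure (\<Inter>(range D)) = Y" using E0 unfolding E1 .
  have Ycl: "Y \<subseteq> closure (\<Inter>(range D))"
  proof
    fix y assume "y \<in> Y"
    then have "y \<in> Y \<inter> closure (\<Inter>(range D))" unfolding E .
    then show "y \<in> closure (\<Inter>(range D))" by simp
  qed
  have sub: "\<Inter>(range D) \<subseteq> {y\<in>Y. \<exists>x. {x'\<in>X. p x' = y} = {x}}"
  proof
    fix y assume yI: "y \<in> \<Inter>(range D)"
    then have yY: "y \<in> Y" using IY by blast
    have dn: "diameter {x\<in>X. p x = y} < inverse (Suc n)" for n using yI by (auto simp: D_def)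
    have d0: "diameter {x\<in>X. p x = y} \<le> 0"
    proof (rule ccontr)
      assume "\<not> ?thesis"
      then have "diameter {x\<in>X. p x = y} > 0" by simp
      then obtain m :: nat where m: "m > 0" "inverse (real m) < diameter {x\<in>X. p x = y}"
        using ex_inverse_of_nat_less by blast
      have "Suc (m - 1) = m" using m(1) by simp
      then have "diameter {x\<in>X. p x = y} < inverse (real m)" using dn[of "m - 1"] by metis
      then show False using m(2) by simp
    qed
    have "y \<in> p ` X" using yY pc(2) by simp
    then obtain x where x: "x \<in> X" "p x = y" by blast
    have "{x'\<in>X. p x' = y} = {x}"
    proof
      show "{x} \<subseteq> {x'\<in>X. p x' = y}" using x by simp
      show "{x'\<in>X. p x' = y} \<subseteq> {x}"
      proof
        fix x' assume x': "x' \<in> {x'\<in>X. p x' = y}"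
        have "dist x' x \<le> diameter {x\<in>X. p x = y}"
          using diameter_bounded_bound[OF Fb x'] x by simp
        then have "dist x' x \<le> 0" using d0 by linarith
        then show "x' \<in> {x}" by simp
      qed
    qed
    then show "y \<in> {y\<in>Y. \<exists>x. {x'\<in>X. p x' = y} = {x}}" using yY by blast
  qed
  have "Y \<subseteq> closure {y\<in>Y. \<exists>x. {x'\<in>X. p x' = y} = {x}}"
    using Ycl closure_mono[OF sub] by blast
  then show False using na unfolding almost_one_to_one_def by blast
qed


lemma funpow_comp_apply: "(f^^a) ((f^^b) x) = (f^^(a+b)) x"
  by (simp add: funpow_add)

theorem proposition4p4:
  fixes X :: "'a::metric_space set" and T :: "'a \<Rightarrow> 'a"
    and Y :: "'b::metric_space set" and S :: "'b \<Rightarrow> 'b" and p :: "'a \<Rightarrow> 'b"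
  assumes "minimal_sys X T" and "minimal_sys Y S"
    and "factor_map X T Y S p"
    and "\<not> almost_one_to_one X Y p"
    and "inj_on S Y"
  shows "(INF y\<in>Y. diameter {x\<in>X. p x = y}) > 0 \<and>
         (proximal_factor X T p \<longrightarrow> thickly_sensitive X T)"
proof -
  have X: "compact X" "X \<noteq> {}" "continuous_on X T" "T ` X = X" "\<forall>x\<in>X. closure (range (\<lambda>n. (T^^n) x)) = X"
    using assms(1) unfolding minimal_sys_def tds_def by auto
  have Y: "compact Y" "Y \<noteq> {}" "continuous_on Y S" "S ` Y = Y" "\<forall>y\<in>Y. closure (range (\<lambda>n. (S^^n) y)) = Y"
    using assms(2) unfolding minimal_sys_def tds_def by auto
  have pc: "continuous_on X p" "p ` X = Y" "\<forall>x\<in>X. p (T x) = S (p x)"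
    using assms(3) unfolding factor_map_def by auto
  have TX: "T ` X \<subseteq> X" using X(4) by simp
  have SY: "S ` Y \<subseteq> Y" using Y(4) by simp
  have P1: "(INF y\<in>Y. diameter {x\<in>X. p x = y}) > 0"
    by (rule part1[OF X(1,3,4) Y(1,2,4,5,3) pc(1,2,3) assms(5,4)])
  define c where "c = (INF y\<in>Y. diameter {x\<in>X. p x = y})"
  have c0: "c > 0" using P1 by (simp add: c_def)
  have Fc: "compact {x\<in>X. p x = y}" for y by (rule fib_compact[OF X(1) pc(1)])
  have Fb: "bounded {x\<in>X. p x = y}" for y by (rule compact_imp_bounded[OF Fc])
  have Fd0: "0 \<le> diameter {x\<in>X. p x = y}" for y by (rule diameter_ge_0[OF Fb])
  have bdd: "bdd_below ((\<lambda>y. diameter {x\<in>X. p x = y}) ` Y)"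
    by (rule bdd_belowI[of _ 0]) (use Fd0 in auto)
  have cle: "c \<le> diameter {x\<in>X. p x = y}" if "y \<in> Y" for y
    unfolding c_def by (rule cINF_lower[OF bdd that])
  have P2: "proximal_factor X T p \<longrightarrow> thickly_sensitive X T"
  proof
    assume prox: "proximal_factor X T p"
    show "thickly_sensitive X T" unfolding thickly_sensitive_def
    proof (intro exI[of _ "c/2"] conjI allI impI)
      show "c/2 > 0" using c0 by simp
      fix U assume U: "openin (top_of_set X) U \<and> U \<noteq> {}"
      then obtain x0 where x0U: "x0 \<in> U" by blast
      have UX: "U \<subseteq> X" and Uo: "\<forall>x\<in>U. \<exists>e>0. \<forall>x'\<in>X. dist x' x < e \<longrightarrow> x' \<in> U"
        using U unfolding openin_euclidean_subtopology_iff by auto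
      obtain \<rho> where rho: "\<rho> > 0" "\<forall>x'\<in>X. dist x' x0 < \<rho> \<longrightarrow> x' \<in> U"
        using Uo x0U by blast
      have x0X: "x0 \<in> X" using x0U UX by blast
      have r2: "\<rho>/2 > 0" using rho(1) by simp
      show "thick (sens_set T U (c/2))" unfolding thick_def
      proof
        fix L
        show "\<exists>m. {m..<m+L} \<subseteq> sens_set T U (c/2)"
        proof (cases "L = 0")
          case True then show ?thesis by simp
        next
          case False
          obtain K where K: "\<forall>x\<in>X. \<exists>s\<le>K. dist ((T^^s) x) x0 < \<rho>/2"
            using return_time[OF X(1,3) TX X(5) x0X r2] by blast
          obtain \<eta> where eta: "\<eta> > 0" "\<forall>x\<in>X. \<forall>x'\<in>X. dist x x' < \<eta> \<longrightarrow> (\<forall>j\<le>K. dist ((T^^j) x) ((T^^j) x') < \<rho>/2)"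
            using modulus[OF X(1,3) TX r2] by blast
          have "\<exists>N. \<forall>A. finite A \<longrightarrow> card A \<le> 2*L \<longrightarrow> A \<subseteq> X \<longrightarrow> (\<forall>a\<in>A. \<forall>b\<in>A. p a = p b) \<longrightarrow>
              (\<exists>t\<le>N. \<forall>a\<in>A. \<forall>b\<in>A. dist ((T^^t) a) ((T^^t) b) < \<eta>)"
            by (rule collapse[OF X(1,3) TX pc(1) prox pc(3)]) (rule eta(1))
          then obtain N where N: "\<forall>A. finite A \<longrightarrow> card A \<le> 2*L \<longrightarrow> A \<subseteq> X \<longrightarrow> (\<forall>a\<in>A. \<forall>b\<in>A. p a = p b) \<longrightarrow>
              (\<exists>t\<le>N. \<forall>a\<in>A. \<forall>b\<in>A. dist ((T^^t) a) ((T^^t) b) < \<eta>)" ..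
          obtain ys where ysY: "ys \<in> Y" using Y(2) by blast
          define n where "n = N + K"
          have "ys \<in> (S^^n) ` Y" using funpow_surj[OF Y(4), of n] ysY by simp
          then obtain y1 where y1: "y1 \<in> Y" "(S^^n) y1 = ys" by blast
          have pairs: "\<forall>i\<in>{..<L}. \<exists>pq. fst pq \<in> {x\<in>X. p x = y1} \<and> snd pq \<in> {x\<in>X. p x = y1} \<and>
              c \<le> dist ((T^^i) ((T^^n) (fst pq))) ((T^^i) ((T^^n) (snd pq)))"
          proof
            fix i assume "i \<in> {..<L}"
            have siY: "(S^^i) ys \<in> Y" using funpow_in[OF SY ysY] .
            have ne: "{x\<in>X. p x = (S^^i) ys} \<noteq> {}" using siY pc(2) by force
            obtain u v where uv: "u \<in> {x\<in>X. p x = (S^^i) ys}" "v \<in> {x\<in>X. p x = (S^^i) ys}"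
              "dist u v = diameter {x\<in>X. p x = (S^^i) ys}"
              using diameter_compact_attained[OF Fc ne] by blast
            have cuv: "c \<le> dist u v" using uv(3) cle[OF siY] by simp
            have F1: "{x\<in>X. p x = (S^^i) ys} = (T^^i) ` {x\<in>X. p x = ys}"
              by (rule fibre_funpow[OF X(4) pc(3) pc(2) assms(5) ysY])
            have F2: "{x\<in>X. p x = (S^^n) y1} = (T^^n) ` {x\<in>X. p x = y1}"
              by (rule fibre_funpow[OF X(4) pc(3) pc(2) assms(5) y1(1)])
            have F: "{x\<in>X. p x = (S^^i) ys} = (T^^i) ` (T^^n) ` {x\<in>X. p x = y1}"
              using F1 F2 y1(2) by simp
            obtain a where a: "a \<in> {x\<in>X. p x = y1}" "u = (T^^i) ((T^^n) a)" using uv(1) unfolding F by blast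
            obtain b where b: "b \<in> {x\<in>X. p x = y1}" "v = (T^^i) ((T^^n) b)" using uv(2) unfolding F by blast
            show "\<exists>pq. fst pq \<in> {x\<in>X. p x = y1} \<and> snd pq \<in> {x\<in>X. p x = y1} \<and>
              c \<le> dist ((T^^i) ((T^^n) (fst pq))) ((T^^i) ((T^^n) (snd pq)))"
              using a b cuv by (intro exI[of _ "(a,b)"]) simp
          qed
          then have "\<exists>f. \<forall>i\<in>{..<L}. fst (f i) \<in> {x\<in>X. p x = y1} \<and> snd (f i) \<in> {x\<in>X. p x = y1} \<and>
              c \<le> dist ((T^^i) ((T^^n) (fst (f i)))) ((T^^i) ((T^^n) (snd (f i))))"
            by (rule bchoice)
          then obtain f where f0: "\<forall>i\<in>{..<L}. fst (f i) \<in> {x\<in>X. p x = y1} \<and> snd (f i) \<in> {x\<in>X. p x = y1} \<and>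
              c \<le> dist ((T^^i) ((T^^n) (fst (f i)))) ((T^^i) ((T^^n) (snd (f i))))"
            ..
          define P where "P = (\<lambda>i. fst (f i))"
          define Q where "Q = (\<lambda>i. snd (f i))"
          have PQ: "P i \<in> X" "Q i \<in> X" "p (P i) = y1" "p (Q i) = y1"
            "c \<le> dist ((T^^i) ((T^^n) (P i))) ((T^^i) ((T^^n) (Q i)))" if "i < L" for i
            using f0 that by (auto simp: P_def Q_def)
          define A where "A = P ` {..<L} \<union> Q ` {..<L}"
          have A1: "finite A" by (simp add: A_def)
          have A2: "card A \<le> 2*L"
          proof -
            have "card A \<le> card (P ` {..<L}) + card (Q ` {..<L})" unfolding A_def by (rule card_Un_le)
            also have "\<dots> \<le> card {..<L} + card {..<L}" by (intro add_mono card_image_le) auto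
            finally show ?thesis by simp
          qed
          have A3: "A \<subseteq> X" using PQ(1,2) by (auto simp: A_def)
          have Ap: "p a = y1" if "a \<in> A" for a using that PQ(3,4) by (auto simp: A_def)
          have A4: "\<forall>a\<in>A. \<forall>b\<in>A. p a = p b" using Ap by simp
          have "\<exists>t\<le>N. \<forall>a\<in>A. \<forall>b\<in>A. dist ((T^^t) a) ((T^^t) b) < \<eta>"
            using mp[OF mp[OF mp[OF mp[OF spec[OF N, of A] A1] A2] A3] A4] .
          then obtain t where t: "t \<le> N" "\<forall>a\<in>A. \<forall>b\<in>A. dist ((T^^t) a) ((T^^t) b) < \<eta>" by blast
          have L0: "0 < L" using False by simp
          have P0A: "P 0 \<in> A" using L0 by (simp add: A_def)
          have wX: "(T^^t) (P 0) \<in> X" using funpow_in[OF TX] A3 P0A by blast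
          obtain s where s: "s \<le> K" "dist ((T^^s) ((T^^t) (P 0))) x0 < \<rho>/2"
            using K wX by blast
          have inU: "(T^^s) ((T^^t) a) \<in> U" if aA: "a \<in> A" for a
          proof -
            have taX: "(T^^t) a \<in> X" using funpow_in[OF TX] A3 aA by blast
            have "dist ((T^^t) a) ((T^^t) (P 0)) < \<eta>" using t(2) aA P0A by blast
            then have "dist ((T^^s) ((T^^t) a)) ((T^^s) ((T^^t) (P 0))) < \<rho>/2"
              using eta(2) taX wX s(1) by blast
            then have "dist ((T^^s) ((T^^t) a)) x0 < \<rho>"
              using s(2) dist_triangle_half_l[of "(T^^s) ((T^^t) a)" "(T^^s) ((T^^t) (P 0))" \<rho> x0]
              by (simp add: dist_commute)
            moreover have "(T^^s) ((T^^t) a) \<in> X" using funpow_in[OF TX] taX by blast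
            ultimately show ?thesis using rho(2) by blast
          qed
          define m where "m = n - (s + t)"
          have stn: "s + t \<le> n" using s(1) t(1) by (simp add: n_def)
          show ?thesis
          proof (intro exI[of _ m] subsetI)
            fix j assume "j \<in> {m..<m+L}"
            then have jm: "m \<le> j" "j < m + L" by auto
            define i where "i = j - m"
            have iL: "i < L" using jm by (simp add: i_def)
            have ji: "j + (s + t) = i + n" using jm stn by (simp add: i_def m_def)
            have eq: "(T^^j) ((T^^s) ((T^^t) a)) = (T^^i) ((T^^n) a)" for a
              by (simp add: funpow_comp_apply ji add.assoc)
            have x1: "(T^^s) ((T^^t) (P i)) \<in> U" using inU iL by (simp add: A_def)
            have x2: "(T^^s) ((T^^t) (Q i)) \<in> U" using inU iL by (simp add: A_def)
            have "c/2 < dist ((T^^j) ((T^^s) ((T^^t) (P i)))) ((T^^j) ((T^^s) ((T^^t) (Q i))))"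
              unfolding eq using PQ(5)[OF iL] c0 by linarith
            then show "j \<in> sens_set T U (c/2)" unfolding sens_set_def using x1 x2 by blast
          qed
        qed
      qed
    qed
  qed
  show ?thesis using P1 P2 by blast
qed

end
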